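(* Let $(f_0,\dots,f_4)$ be a rational solution of $A_4(\alpha_0,\dots,\alpha_4)$. Then each $f_j$ ($0\le j\le4$) is an odd function of $t$, i.e. $f_j(-t)=-f_j(t)$.
   Context: The $A_4^{(1)}$ Painlevé equation $A_4(\alpha_0,\dots,\alpha_4)$ with complex parameters $\alpha_j$ is the system for five functions $f_0,\dots,f_4$ of $t$ (indices in $\mathbb{Z}/5\mathbb{Z}$, ${}'=d/dt$): $f_j'=f_j(f_{j+1}-f_{j+2}+f_{j+3}-f_{j+4})+\alpha_j$ ($j=0,\dots,4$), $f_0+\dots+f_4=t$; hence $\sum_j\alpha_j=1$. A rational solution is a tuple of rational functions of $t$ satisfying it. *)

theory Defs
  imports Complex_Main "HOL-Computational_Algebra.Polynomial"
begin

text \<open>A rational function of t is represented by a numerator and a nonzero denominator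
  polynomial; the tuple (f_0,...,f_4) is given by P j / Q j, indices taken mod 5.\<close>

definition ratf :: "(nat \<Rightarrow> complex poly) \<Rightarrow> (nat \<Rightarrow> complex poly) \<Rightarrow> nat \<Rightarrow> complex \<Rightarrow> complex" where
  "ratf P Q j t = poly (P (j mod 5)) t / poly (Q (j mod 5)) t"

definition A4_rational_solution ::
  "(nat \<Rightarrow> complex) \<Rightarrow> (nat \<Rightarrow> complex poly) \<Rightarrow> (nat \<Rightarrow> complex poly) \<Rightarrow> bool" where
  "A4_rational_solution \<alpha> P Q \<longleftrightarrow>
     (\<forall>j<5. Q j \<noteq> 0) \<and>
     (\<forall>t. (\<forall>j<5. poly (Q j) t \<noteq> 0) \<longrightarrow>
        (\<forall>j<5. (ratf P Q j has_field_derivative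
                 (ratf P Q j t * (ratf P Q (j+1) t - ratf P Q (j+2) t + ratf P Q (j+3) t
                                  - ratf P Q (j+4) t) + \<alpha> j)) (at t)) \<and>
        (\<Sum>j<5. ratf P Q j t) = t)"

end

theory Submission
  imports Defs
begin

lemma ev_poly_nz:
  fixes p :: "complex poly"
  assumes "p \<noteq> 0"
  shows "eventually (\<lambda>x. poly p x \<noteq> 0) at_infinity"
proof (rule eventually_at_infinityI[of "Max (norm ` {x. poly p x = 0}) + 1"])
  fix x::complex assume H: "Max (norm ` {x. poly p x = 0}) + 1 \<le> norm x"
  show "poly p x \<noteq> 0"
  proof
    assume "poly p x = 0"
    then have "norm x \<in> norm ` {x. poly p x = 0}" by auto
    moreover have "finite (norm ` {x. poly p x = 0})"
      using assms poly_roots_finite by blast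
    ultimately have "norm x \<le> Max (norm ` {x. poly p x = 0})" by simp
    then show False using H by simp
  qed
qed

lemma atinf_nonbot: "(at_infinity :: complex filter) \<noteq> bot"
proof
  assume "(at_infinity :: complex filter) = bot"
  then have "eventually (\<lambda>x::complex. False) at_infinity" by simp
  then obtain b::real where B: "\<And>x::complex. norm x \<ge> b \<Longrightarrow> False"
    unfolding eventually_at_infinity by blast
  have "b \<le> \<bar>b\<bar> + 1" by linarith
  with B[of "of_real (\<bar>b\<bar>+1)"] show False by simp
qed

lemma ev_nz: "eventually (\<lambda>x::complex. x \<noteq> 0) at_infinity"
  by (rule eventually_at_infinityI[of 1]) auto

lemma filterlim_uminus_atinf: "filterlim (uminus :: complex \<Rightarrow> complex) at_infinity at_infinity"
  unfolding filterlim_def le_filter_def eventually_filtermap eventually_at_infinity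
  by (metis norm_minus_cancel)

lemma rat_lim:
  fixes P Q :: "complex poly"
  assumes "Q \<noteq> 0" "degree P + b \<le> degree Q + a"
  shows "((\<lambda>t. poly P t / poly Q t * t^b / t^a) \<longlongrightarrow> coeff P (degree Q + a - b) / lead_coeff Q) at_infinity"
proof -
  define n where "n = degree Q + a - (degree P + b)"
  have n: "degree Q + a = degree P + b + n" using assms(2) unfolding n_def by simp
  have ev: "eventually (\<lambda>t. poly P t / poly Q t * t^b / t^a =
      (poly P t / t^degree P) * inverse (poly Q t / t^degree Q) * inverse (t^n)) at_infinity"
    using ev_poly_nz[OF assms(1)] ev_nz
  proof eventually_elim
    case (elim t)
    have "t^(degree Q) * t^a = t^(degree P) * t^b * t^n" using n by (metis power_add)
    then show ?case using elim by (simp add: field_simps)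
  qed
  have l1: "((\<lambda>t. poly P t / t^degree P) \<longlongrightarrow> lead_coeff P) at_infinity"
    by (rule poly_divide_tendsto_aux)
  have l2: "((\<lambda>t. inverse (poly Q t / t^degree Q)) \<longlongrightarrow> inverse (lead_coeff Q)) at_infinity"
    using poly_divide_tendsto_aux[of Q] assms(1) by (intro tendsto_inverse) auto
  show ?thesis
  proof (cases "n = 0")
    case True
    then have "coeff P (degree Q + a - b) = lead_coeff P" using n by simp
    moreover have "((\<lambda>t. (poly P t / t^degree P) * inverse (poly Q t / t^degree Q) * inverse (t^n))
       \<longlongrightarrow> lead_coeff P * inverse (lead_coeff Q) * 1) at_infinity"
      using True by (intro tendsto_intros l1 l2) auto
    ultimately show ?thesis using ev
      by (simp add: field_simps tendsto_cong)
  next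
    case False
    then have "coeff P (degree Q + a - b) = 0" using n by (intro coeff_eq_0) simp
    moreover have "((\<lambda>t. inverse (t^n)) \<longlongrightarrow> (0::complex)) at_infinity"
      using filterlim_compose[OF tendsto_inverse_0 filterlim_power_at_infinity[OF False]] by (simp add: o_def)
    then have "((\<lambda>t. (poly P t / t^degree P) * inverse (poly Q t / t^degree Q) * inverse (t^n))
       \<longlongrightarrow> lead_coeff P * inverse (lead_coeff Q) * 0) at_infinity"
      by (intro tendsto_intros l1 l2)
    ultimately show ?thesis using ev
      by (simp add: tendsto_cong)
  qed
qed

lemma rat_lim0:
  fixes P Q :: "complex poly"
  assumes "Q \<noteq> 0" "degree P + b < degree Q + a"
  shows "((\<lambda>t. poly P t / poly Q t * t^b / t^a) \<longlongrightarrow> 0) at_infinity"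
proof -
  have "coeff P (degree Q + a - b) = 0" using assms(2) by (intro coeff_eq_0) simp
  then show ?thesis using rat_lim[OF assms(1), of P b a] assms(2) by simp
qed
definition ratD :: "complex poly \<Rightarrow> complex poly \<Rightarrow> complex poly" where
  "ratD p q = pderiv p * q - p * pderiv q"

definition Dr :: "complex poly \<Rightarrow> complex poly \<Rightarrow> complex \<Rightarrow> complex" where
  "Dr p q t = poly (ratD p q) t / poly (q * q) t"

lemma ratD_deg: "degree (ratD p q) \<le> max ((degree p - 1) + degree q) (degree p + (degree q - 1))"
proof -
  have "degree (pderiv p * q) \<le> (degree p - 1) + degree q"
    using degree_mult_le[of "pderiv p" q] degree_pderiv[of p] by simp
  moreover have "degree (p * pderiv q) \<le> degree p + (degree q - 1)"
    using degree_mult_le[of p "pderiv q"] degree_pderiv[of q] by simp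
  ultimately show ?thesis unfolding ratD_def
    using degree_diff_le_max[of "pderiv p * q" "p * pderiv q"] by linarith
qed

lemma ratD_deriv:
  assumes "poly q t \<noteq> 0"
  shows "((\<lambda>s. poly p s / poly q s) has_field_derivative Dr p q t) (at t)"
proof -
  have "((\<lambda>s. poly p s / poly q s) has_field_derivative
     (poly (pderiv p) t * poly q t - poly p t * poly (pderiv q) t) / (poly q t * poly q t)) (at t)"
    by (rule DERIV_divide[OF poly_DERIV poly_DERIV assms])
  then show ?thesis unfolding Dr_def ratD_def by simp
qed

lemma open_poly_nz: "(q::complex poly) \<noteq> 0 \<Longrightarrow> open {s. poly q s \<noteq> 0}"
proof -
  assume "q \<noteq> 0"
  then have "closed {s. poly q s = 0}" using poly_roots_finite finite_imp_closed by blast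
  moreover have "{s. poly q s \<noteq> 0} = - {s. poly q s = 0}" by auto
  ultimately show ?thesis by (simp add: open_Compl)
qed

lemma Dr_lim0:
  assumes "q \<noteq> 0" "degree p \<le> k" "max ((k - 1) + degree q) (k + (degree q - 1)) + b < 2 * degree q + a"
  shows "((\<lambda>t. Dr p q t * t^b / t^a) \<longlongrightarrow> 0) at_infinity"
proof -
  have qq: "q * q \<noteq> 0" "degree (q*q) = 2 * degree q" using assms(1) by (auto simp: degree_mult_eq)
  have "degree (ratD p q) + b < degree (q*q) + a"
    using ratD_deg[of p q] assms(2,3) qq(2) by linarith
  from rat_lim0[OF qq(1) this] show ?thesis unfolding Dr_def .
qed

definition bs :: "(nat \<Rightarrow> complex) \<Rightarrow> nat \<Rightarrow> complex" where
  "bs x j = x (j+1) - x (j+2) + x (j+3) - x (j+4)"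

lemma key0:
  fixes a0 a1 a2 a3 a4 :: complex
  assumes "a0*(a1-a2+a3-a4)=0" "a1*(a2-a3+a4-a0)=0" "a2*(a3-a4+a0-a1)=0"
   "a3*(a4-a0+a1-a2)=0" "a4*(a0-a1+a2-a3)=0" "a0+a1+a2+a3+a4=0"
  shows "a0 = 0"
  using assms by algebra

lemma key:
  fixes a0 a1 a2 a3 a4 e0 e1 e2 e3 e4 :: complex
  assumes "a0*(a1-a2+a3-a4)=0" "a1*(a2-a3+a4-a0)=0" "a2*(a3-a4+a0-a1)=0"
   "a3*(a4-a0+a1-a2)=0" "a4*(a0-a1+a2-a3)=0" "a0+a1+a2+a3+a4=1"
   "e0*(a1-a2+a3-a4) + a0*(e1-e2+e3-e4)=0" "e1*(a2-a3+a4-a0)+a1*(e2-e3+e4-e0)=0" "e2*(a3-a4+a0-a1)+a2*(e3-e4+e0-e1)=0"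
   "e3*(a4-a0+a1-a2)+a3*(e4-e0+e1-e2)=0" "e4*(a0-a1+a2-a3)+a4*(e0-e1+e2-e3)=0" "e0+e1+e2+e3+e4=0"
  shows "e0 = 0"
  using assms by algebra

lemma key0_all:
  fixes a :: "nat \<Rightarrow> complex"
  assumes per: "\<And>j. a j = a (j mod 5)" and h: "\<And>j. j < 5 \<Longrightarrow> a j * bs a j = 0"
    and s: "(\<Sum>j<5. a j) = 0"
  shows "\<forall>j<5. a j = 0"
proof -
  have p: "a 5 = a 0" "a 6 = a 1" "a 7 = a 2" "a 8 = a 3" using per[of 5] per[of 6] per[of 7] per[of 8] by simp_all
  have h0: "a 0*(a 1-a 2+a 3-a 4)=0" using h[of 0] unfolding bs_def add_0_left by simp
  have h1: "a 1*(a 2-a 3+a 4-a 0)=0" using h[of 1] p by (simp add: bs_def numeral_eq_Suc)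
  have h2: "a 2*(a 3-a 4+a 0-a 1)=0" using h[of 2] p by (simp add: bs_def numeral_eq_Suc)
  have h3: "a 3*(a 4-a 0+a 1-a 2)=0" using h[of 3] p by (simp add: bs_def numeral_eq_Suc)
  have h4: "a 4*(a 0-a 1+a 2-a 3)=0" using h[of 4] p by (simp add: bs_def numeral_eq_Suc)
  have s': "a 0+a 1+a 2+a 3+a 4=0" using s by (simp add: eval_nat_numeral)
  have "a 0 = 0" by (rule key0[OF h0 h1 h2 h3 h4 s'])
  moreover have "a 1 = 0" by (rule key0[OF h1 h2 h3 h4 h0]) (use s' in algebra)
  moreover have "a 2 = 0" by (rule key0[OF h2 h3 h4 h0 h1]) (use s' in algebra)
  moreover have "a 3 = 0" by (rule key0[OF h3 h4 h0 h1 h2]) (use s' in algebra)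
  moreover have "a 4 = 0" by (rule key0[OF h4 h0 h1 h2 h3]) (use s' in algebra)
  ultimately show ?thesis by (auto simp: less_Suc_eq numeral_eq_Suc)
qed


lemma key_all:
  fixes a e :: "nat \<Rightarrow> complex"
  assumes per: "\<And>j. a j = a (j mod 5)" and h: "\<And>j. j < 5 \<Longrightarrow> a j * bs a j = 0"
    and s: "(\<Sum>j<5. a j) = 1"
    and pe: "\<And>j. e j = e (j mod 5)" and he: "\<And>j. j < 5 \<Longrightarrow> e j * bs a j + a j * bs e j = 0"
    and se: "(\<Sum>j<5. e j) = 0"
  shows "\<forall>j<5. e j = 0"
proof -
  have p: "a 5 = a 0" "a 6 = a 1" "a 7 = a 2" "a 8 = a 3" using per[of 5] per[of 6] per[of 7] per[of 8] by simp_all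
  have q: "e 5 = e 0" "e 6 = e 1" "e 7 = e 2" "e 8 = e 3" using pe[of 5] pe[of 6] pe[of 7] pe[of 8] by simp_all
  have h0: "a 0*(a 1-a 2+a 3-a 4)=0" using h[of 0] unfolding bs_def add_0_left by simp
  have h1: "a 1*(a 2-a 3+a 4-a 0)=0" using h[of 1] p by (simp add: bs_def numeral_eq_Suc)
  have h2: "a 2*(a 3-a 4+a 0-a 1)=0" using h[of 2] p by (simp add: bs_def numeral_eq_Suc)
  have h3: "a 3*(a 4-a 0+a 1-a 2)=0" using h[of 3] p by (simp add: bs_def numeral_eq_Suc)
  have h4: "a 4*(a 0-a 1+a 2-a 3)=0" using h[of 4] p by (simp add: bs_def numeral_eq_Suc)
  have g0: "e 0*(a 1-a 2+a 3-a 4) + a 0*(e 1-e 2+e 3-e 4)=0" using he[of 0] unfolding bs_def add_0_left by simp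
  have g1: "e 1*(a 2-a 3+a 4-a 0) + a 1*(e 2-e 3+e 4-e 0)=0" using he[of 1] p q by (simp add: bs_def numeral_eq_Suc)
  have g2: "e 2*(a 3-a 4+a 0-a 1) + a 2*(e 3-e 4+e 0-e 1)=0" using he[of 2] p q by (simp add: bs_def numeral_eq_Suc)
  have g3: "e 3*(a 4-a 0+a 1-a 2) + a 3*(e 4-e 0+e 1-e 2)=0" using he[of 3] p q by (simp add: bs_def numeral_eq_Suc)
  have g4: "e 4*(a 0-a 1+a 2-a 3) + a 4*(e 0-e 1+e 2-e 3)=0" using he[of 4] p q by (simp add: bs_def numeral_eq_Suc)
  have s': "a 0+a 1+a 2+a 3+a 4=1" using s by (simp add: eval_nat_numeral)
  have se': "e 0+e 1+e 2+e 3+e 4=0" using se by (simp add: eval_nat_numeral)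
  have "e 0 = 0" by (rule key[OF h0 h1 h2 h3 h4 s' g0 g1 g2 g3 g4 se'])
  moreover have "e 1 = 0" by (rule key[OF h1 h2 h3 h4 h0 _ g1 g2 g3 g4 g0]) (use s' se' in algebra)+
  moreover have "e 2 = 0" by (rule key[OF h2 h3 h4 h0 h1 _ g2 g3 g4 g0 g1]) (use s' se' in algebra)+
  moreover have "e 3 = 0" by (rule key[OF h3 h4 h0 h1 h2 _ g3 g4 g0 g1 g2]) (use s' se' in algebra)+
  moreover have "e 4 = 0" by (rule key[OF h4 h0 h1 h2 h3 _ g4 g0 g1 g2 g3]) (use s' se' in algebra)+
  ultimately show ?thesis by (auto simp: less_Suc_eq numeral_eq_Suc)
qed



lemma lim_eq_ev:
  fixes f g :: "complex \<Rightarrow> complex"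
  assumes "(f \<longlongrightarrow> a) at_infinity" "(g \<longlongrightarrow> b) at_infinity" "eventually (\<lambda>t. f t = g t) at_infinity"
  shows "a = (b::complex)"
proof -
  have ga: "(g \<longlongrightarrow> a) at_infinity" using Lim_transform_eventually[OF assms(1,3)] .
  show ?thesis by (rule tendsto_unique[OF atinf_nonbot ga assms(2)])
qed

lemma bs_div: "bs (\<lambda>i. x i / d) j = bs x j / d"
  by (simp add: bs_def diff_divide_distrib add_divide_distrib)

lemma bs_md: "bs (\<lambda>i. x i * c / d) j = bs x j * c / d"
  by (simp add: bs_def diff_divide_distrib add_divide_distrib algebra_simps)

lemma alg1:
  fixes t T S h B f H :: complex
  assumes "t \<noteq> 0" "T \<noteq> 0" "S \<noteq> 0"
  shows "(h*B + f*H - h*H) * T / (S * t) = (h*T/S)*(B/t) + (f/t)*(H*T/S) - (h*T/S)*(H/t)"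
  using assms by (simp add: field_simps)

lemma prod_split5:
  fixes g :: "nat \<Rightarrow> 'a::comm_monoid_mult"
  shows "(\<Prod>i<5. g i) = g (j mod 5) * (\<Prod>i\<in>{..<5}-{j mod 5}. g i)"
  by (rule prod.remove) auto

theorem corollary1p4:
  fixes \<alpha> :: "nat \<Rightarrow> complex" and P Q :: "nat \<Rightarrow> complex poly"
  assumes "A4_rational_solution \<alpha> P Q"
  shows "\<forall>j<5. \<forall>t. poly (Q j) t \<noteq> 0 \<and> poly (Q j) (-t) \<noteq> 0 \<longrightarrow>
           ratf P Q j (-t) = - ratf P Q j t"
proof -
  note A = assms[unfolded A4_rational_solution_def]
  have Qnz: "\<And>j. j<5 \<Longrightarrow> Q j \<noteq> 0" using conjunct1[OF A] by simp
  note A2 = conjunct2[OF A, THEN spec, THEN mp]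
  define f where "f = ratf P Q"
  define W where "W = (\<Prod>i<5. Q i)"
  define u where "u = (\<lambda>j. P (j mod 5) * (\<Prod>i\<in>{..<5}-{j mod 5}. Q i))"
  define m where "m = degree W"
  have Wnz: "W \<noteq> 0" unfolding W_def using Qnz by simp
  have Wpoly: "\<And>t. poly W t \<noteq> 0 \<longleftrightarrow> (\<forall>i<5. poly (Q i) t \<noteq> 0)"
    unfolding W_def by (auto simp: poly_prod)
  have uper: "\<And>j. u j = u (j mod 5)" unfolding u_def by simp
  have fu: "\<And>j t. poly W t \<noteq> 0 \<Longrightarrow> f j t = poly (u j) t / poly W t"
  proof -
    fix j :: nat and t :: complex assume Wt: "poly W t \<noteq> 0"
    define R where "R = (\<Prod>i\<in>{..<5}-{j mod 5}. poly (Q i) t)"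
    have e1: "poly W t = poly (Q (j mod 5)) t * R"
      unfolding W_def R_def poly_prod by (rule prod_split5)
    have e2: "poly (u j) t = poly (P (j mod 5)) t * R" unfolding u_def R_def poly_mult poly_prod ..
    have Rnz: "R \<noteq> 0" and Qjnz: "poly (Q (j mod 5)) t \<noteq> 0" using Wt unfolding e1 by auto
    show "f j t = poly (u j) t / poly W t" unfolding e1 e2 f_def ratf_def
      by (rule mult_divide_mult_cancel_right[OF Rnz, symmetric])
  qed
  have evW: "eventually (\<lambda>t. poly W t \<noteq> 0) at_infinity" by (rule ev_poly_nz[OF Wnz])
  have ode: "\<And>j t. j<5 \<Longrightarrow> poly W t \<noteq> 0 \<Longrightarrow> Dr (u j) W t = f j t * bs (\<lambda>i. f i t) j + \<alpha> j"
  proof -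
    fix j :: nat and t :: complex assume j: "j<5" and Wt: "poly W t \<noteq> 0"
    have "(f j has_field_derivative (f j t * bs (\<lambda>i. f i t) j + \<alpha> j)) (at t)"
      using conjunct1[OF A2[OF Wt[unfolded Wpoly]]] j unfolding f_def bs_def by blast
    then have X: "((\<lambda>s. poly (u j) s / poly W s) has_field_derivative (f j t * bs (\<lambda>i. f i t) j + \<alpha> j)) (at t)"
    proof (rule has_field_derivative_transform_within_open[OF _ open_poly_nz[OF Wnz]])
      show "t \<in> {s. poly W s \<noteq> 0}" using Wt by simp
      fix s assume "s \<in> {s. poly W s \<noteq> 0}"
      then show "f j s = poly (u j) s / poly W s" using fu by simp
    qed
    have Y: "((\<lambda>s. poly (u j) s / poly W s) has_field_derivative Dr (u j) W t) (at t)"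
      by (rule ratD_deriv[OF Wt])
    show "Dr (u j) W t = f j t * bs (\<lambda>i. f i t) j + \<alpha> j" using DERIV_unique[OF Y X] .
  qed
  have sumf: "\<And>t. poly W t \<noteq> 0 \<Longrightarrow> (\<Sum>j<5. f j t) = t"
  proof -
    fix t :: complex assume Wt: "poly W t \<noteq> 0"
    show "(\<Sum>j<5. f j t) = t" using conjunct2[OF A2[OF Wt[unfolded Wpoly]]] unfolding f_def .
  qed
  define Mx where "Mx = Max ((\<lambda>j. degree (u j)) ` {..<5})"
  have degle: "\<And>j. degree (u j) \<le> Mx"
  proof -
    fix j :: nat
    have "degree (u (j mod 5)) \<le> Mx" unfolding Mx_def by (rule Max_ge) auto
    then show "degree (u j) \<le> Mx" using uper[of j] by simp
  qed
  obtain j0 where j0: "j0 < 5" "degree (u j0) = Mx"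
  proof -
    have "Mx \<in> (\<lambda>j. degree (u j)) ` {..<5}" unfolding Mx_def by (rule Max_in) (simp_all add: lessThan_empty_iff)
    then show ?thesis using that by auto
  qed
  have flim: "\<And>j e. degree (u j) \<le> m + e \<Longrightarrow>
      ((\<lambda>t. f j t / t^e) \<longlongrightarrow> coeff (u j) (m+e) / lead_coeff W) at_infinity"
  proof -
    fix j e :: nat assume d: "degree (u j) \<le> m + e"
    have L: "((\<lambda>t. poly (u j) t / poly W t * t^0 / t^e) \<longlongrightarrow> coeff (u j) (m+e) / lead_coeff W) at_infinity"
      using rat_lim[OF Wnz, of "u j" 0 e] d unfolding m_def by simp
    have ev: "eventually (\<lambda>t. poly (u j) t / poly W t * t^0 / t^e = f j t / t^e) at_infinity"
      using evW by eventually_elim (simp add: fu)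
    show "((\<lambda>t. f j t / t^e) \<longlongrightarrow> coeff (u j) (m+e) / lead_coeff W) at_infinity"
      by (rule Lim_transform_eventually[OF L ev])
  qed
  have gen: "\<And>E. E \<ge> 1 \<Longrightarrow> Mx \<le> m + E \<Longrightarrow>
      (\<forall>j<5. coeff (u j) (m+E) / lead_coeff W * bs (\<lambda>i. coeff (u i) (m+E) / lead_coeff W) j = 0) \<and>
      (\<Sum>j<5. coeff (u j) (m+E) / lead_coeff W) = (if E = 1 then 1 else 0)"
  proof -
    fix E :: nat assume E1: "E \<ge> 1" and EM: "Mx \<le> m + E"
    define a where "a = (\<lambda>j. coeff (u j) (m+E) / lead_coeff W)"
    have fl: "\<And>j. ((\<lambda>t. f j t / t^E) \<longlongrightarrow> a j) at_infinity"
      unfolding a_def using flim degle EM by (meson order_trans)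
    have sa: "(\<Sum>j<5. a j) = (if E = 1 then 1 else 0)"
    proof -
      have L1: "((\<lambda>t. \<Sum>j<5. f j t / t^E) \<longlongrightarrow> (\<Sum>j<5. a j)) at_infinity" by (intro tendsto_sum fl)
      have ev: "eventually (\<lambda>t. (\<Sum>j<5. f j t / t^E) = inverse (t^(E-1))) at_infinity"
        using evW ev_nz
      proof eventually_elim
        case (elim t)
        have s1: "(\<Sum>j<5. f j t / t^E) = t / t^E" using sumf[OF elim(1)] by (simp add: sum_divide_distrib[symmetric])
        have s2: "t^E = t * t^(E-1)" using E1 by (metis Suc_diff_1 less_le_trans power_Suc zero_less_one)
        show ?case using s1 s2 elim(2) by (simp add: inverse_eq_divide)
      qed
      have L2: "((\<lambda>t::complex. inverse (t^(E-1))) \<longlongrightarrow> (if E = 1 then 1 else 0)) at_infinity"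
      proof (cases "E = 1")
        case True then show ?thesis using tendsto_const[of "1::complex" at_infinity] by simp
      next
        case False
        then have "E - 1 \<noteq> 0" using E1 by simp
        from filterlim_compose[OF tendsto_inverse_0 filterlim_power_at_infinity[OF this]]
        show ?thesis using False by (simp add: o_def)
      qed
      show ?thesis using lim_eq_ev[OF L1 L2 ev] .
    qed
    have prod0: "\<And>j. j<5 \<Longrightarrow> a j * bs a j = 0"
    proof -
      fix j :: nat assume j: "j<5"
      have L1: "((\<lambda>t. Dr (u j) W t * t^0 / t^(2*E)) \<longlongrightarrow> 0) at_infinity"
        by (rule Dr_lim0[OF Wnz degle[of j]]) (use EM E1 in \<open>simp add: m_def[symmetric]; arith\<close>)
      have L2: "((\<lambda>t. (f j t / t^E) * bs (\<lambda>i. f i t / t^E) j + \<alpha> j / t^(2*E)) \<longlongrightarrow> a j * bs a j + 0) at_infinity"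
        unfolding bs_def using E1
        by (intro tendsto_intros fl tendsto_divide_0[OF tendsto_const] filterlim_power_at_infinity) auto
      have ev: "eventually (\<lambda>t. Dr (u j) W t * t^0 / t^(2*E) = (f j t / t^E) * bs (\<lambda>i. f i t / t^E) j + \<alpha> j / t^(2*E)) at_infinity"
        using evW ev_nz
      proof eventually_elim
        case (elim t)
        have T: "t^(2*E) = t^E * t^E" by (simp add: mult_2 power_add)
        have B: "bs (\<lambda>i. f i t / t^E) j = bs (\<lambda>i. f i t) j / t^E" by (rule bs_div)
        show ?case unfolding ode[OF j elim(1)] B T by (simp add: add_divide_distrib)
      qed
      show "a j * bs a j = 0" using lim_eq_ev[OF L1 L2 ev] by simp
    qed
    show "(\<forall>j<5. coeff (u j) (m+E) / lead_coeff W * bs (\<lambda>i. coeff (u i) (m+E) / lead_coeff W) j = 0) \<and>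
      (\<Sum>j<5. coeff (u j) (m+E) / lead_coeff W) = (if E = 1 then 1 else 0)"
      using prod0 sa unfolding a_def by blast
  qed
  have Mx_le: "Mx \<le> m + 1"
  proof (rule ccontr)
    assume H: "\<not> Mx \<le> m + 1"
    define E where "E = Mx - m"
    have E2: "E \<ge> 2" "Mx \<le> m + E" "m + E = Mx" using H unfolding E_def by auto
    define a where "a = (\<lambda>j. coeff (u j) (m+E) / lead_coeff W)"
    have g: "\<forall>j<5. a j * bs a j = 0" "(\<Sum>j<5. a j) = 0"
      using gen[of E] E2 unfolding a_def by auto
    have aper: "\<And>j. a j = a (j mod 5)" unfolding a_def u_def by simp
    have "a j0 = 0" using key0_all[of a, OF aper] g j0(1) by blast
    moreover have "u j0 \<noteq> 0" using j0(2) H by auto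
    then have cz: "coeff (u j0) Mx \<noteq> 0" using leading_coeff_0_iff[of "u j0"] unfolding j0(2) by blast
    then have "a j0 \<noteq> 0" unfolding a_def E2(3) using Wnz by simp
    ultimately show False by simp
  qed
  define a where "a = (\<lambda>j. coeff (u j) (m+1) / lead_coeff W)"
  have aA: "\<forall>j<5. a j * bs a j = 0" and asum: "(\<Sum>j<5. a j) = 1"
    using gen[of 1] Mx_le unfolding a_def by auto
  have aper: "\<And>j. a j = a (j mod 5)" unfolding a_def u_def by simp
  have fl: "\<And>j. ((\<lambda>t. f j t / t) \<longlongrightarrow> a j) at_infinity"
  proof -
    fix j :: nat
    have "degree (u j) \<le> m + 1" using degle[of j] Mx_le by linarith
    from flim[OF this] show "((\<lambda>t. f j t / t) \<longlongrightarrow> a j) at_infinity" by (simp add: a_def)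
  qed
  have flm: "\<And>j. ((\<lambda>t. f j (-t) / t) \<longlongrightarrow> - a j) at_infinity"
  proof -
    fix j :: nat
    have "((\<lambda>t. f j (-t) / (-t)) \<longlongrightarrow> a j) at_infinity"
      using filterlim_compose[OF fl[of j] filterlim_uminus_atinf] by simp
    then have "((\<lambda>t. - (f j (-t) / (-t))) \<longlongrightarrow> - a j) at_infinity" by (rule tendsto_minus)
    then show "((\<lambda>t. f j (-t) / t) \<longlongrightarrow> - a j) at_infinity" by simp
  qed
  define Wm where "Wm = W \<circ>\<^sub>p [:0, -1:]"
  define v where "v = (\<lambda>j. u j * Wm + (u j \<circ>\<^sub>p [:0, -1:]) * W)"
  define V where "V = W * Wm"
  define h where "h = (\<lambda>j t. f j t + f j (-t))"
  have pm: "\<And>(p::complex poly) (t::complex). poly (p \<circ>\<^sub>p [:0, -1:]) t = poly p (-t)" by (simp add: poly_pcompose)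
  have degm: "\<And>p::complex poly. degree (p \<circ>\<^sub>p [:0, -1:]) = degree p" by (simp add: degree_pcompose)
  have Wmnz: "Wm \<noteq> 0" unfolding Wm_def using Wnz pcompose_eq_0_iff[of "[:0, -1::complex:]" W] by simp
  have Vnz: "V \<noteq> 0" unfolding V_def using Wnz Wmnz by simp
  have degV: "degree V = 2 * m" unfolding V_def m_def using Wnz Wmnz
    by (simp add: degree_mult_eq Wm_def degm)
  have Vpoly: "\<And>t. poly V t \<noteq> 0 \<longleftrightarrow> poly W t \<noteq> 0 \<and> poly W (-t) \<noteq> 0"
    unfolding V_def Wm_def by (simp add: pm)
  have evV: "eventually (\<lambda>t. poly V t \<noteq> 0) at_infinity" by (rule ev_poly_nz[OF Vnz])
  have hv: "\<And>j t. poly V t \<noteq> 0 \<Longrightarrow> h j t = poly (v j) t / poly V t"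
  proof -
    fix j :: nat and t :: complex assume Vt: "poly V t \<noteq> 0"
    then have W1: "poly W t \<noteq> 0" and W2: "poly W (-t) \<noteq> 0" using Vpoly by auto
    show "h j t = poly (v j) t / poly V t"
      unfolding h_def fu[OF W1] fu[OF W2] v_def V_def Wm_def using W1 W2
      by (simp add: pm field_simps)
  qed
  have vper: "\<And>j. v j = v (j mod 5)" unfolding v_def u_def by simp
  have dh: "\<And>j t. j<5 \<Longrightarrow> poly V t \<noteq> 0 \<Longrightarrow>
      Dr (v j) V t = h j t * bs (\<lambda>i. f i t) j + f j t * bs (\<lambda>i. h i t) j - h j t * bs (\<lambda>i. h i t) j"
  proof -
    fix j :: nat and t :: complex assume j: "j<5" and Vt: "poly V t \<noteq> 0"
    then have W1: "poly W t \<noteq> 0" and W2: "poly W (-t) \<noteq> 0" using Vpoly by auto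
    have d1: "((\<lambda>s. poly (u j) s / poly W s) has_field_derivative Dr (u j) W t) (at t)"
      by (rule ratD_deriv[OF W1])
    have d2: "((\<lambda>s. poly (u j) (-s) / poly W (-s)) has_field_derivative Dr (u j) W (-t) * (-1)) (at t)"
      using DERIV_chain2[OF ratD_deriv[OF W2, of "u j"] DERIV_minus[OF DERIV_ident, of t UNIV]] by simp
    have d3: "((\<lambda>s. poly (u j) s / poly W s + poly (u j) (-s) / poly W (-s)) has_field_derivative
        Dr (u j) W t + Dr (u j) W (-t) * (-1)) (at t)"
      by (rule DERIV_add[OF d1 d2])
    have d4: "((\<lambda>s. poly (v j) s / poly V s) has_field_derivative
        Dr (u j) W t + Dr (u j) W (-t) * (-1)) (at t)"
    proof (rule has_field_derivative_transform_within_open[OF d3 open_poly_nz[OF Vnz]])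
      show "t \<in> {s. poly V s \<noteq> 0}" using Vt by simp
      fix s assume "s \<in> {s. poly V s \<noteq> 0}"
      then have "poly V s \<noteq> 0" by simp
      then have s1: "poly W s \<noteq> 0" "poly W (-s) \<noteq> 0" using Vpoly by auto
      show "poly (u j) s / poly W s + poly (u j) (-s) / poly W (-s) = poly (v j) s / poly V s"
        using hv[OF \<open>poly V s \<noteq> 0\<close>, of j] unfolding h_def fu[OF s1(1)] fu[OF s1(2)] by simp
    qed
    have d5: "Dr (v j) V t = Dr (u j) W t - Dr (u j) W (-t)"
      using DERIV_unique[OF ratD_deriv[OF Vt, of "v j"] d4] by simp
    have bsh: "bs (\<lambda>i. h i t) j = bs (\<lambda>i. f i t) j + bs (\<lambda>i. f i (-t)) j"
      unfolding bs_def h_def by (simp add: algebra_simps)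
    show "Dr (v j) V t = h j t * bs (\<lambda>i. f i t) j + f j t * bs (\<lambda>i. h i t) j - h j t * bs (\<lambda>i. h i t) j"
      unfolding d5 ode[OF j W1] ode[OF j W2] bsh unfolding h_def by (simp add: algebra_simps)
  qed
  have h1: "\<And>j. ((\<lambda>t. h j t / t) \<longlongrightarrow> 0) at_infinity"
  proof -
    fix j :: nat
    have "((\<lambda>t. f j t / t + f j (-t) / t) \<longlongrightarrow> a j + - a j) at_infinity"
      by (intro tendsto_add fl flm)
    then show "((\<lambda>t. h j t / t) \<longlongrightarrow> 0) at_infinity" unfolding h_def by (simp add: add_divide_distrib)
  qed
  have vz: "\<forall>j<5. v j = 0"
  proof (rule ccontr)
    assume "\<not> (\<forall>j<5. v j = 0)"
    then obtain j1 where j1: "j1 < 5" "v j1 \<noteq> 0" by auto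
    define K where "K = Max ((\<lambda>j. degree (v j)) ` {..<5})"
    have degv: "\<And>j. degree (v j) \<le> K"
    proof -
      fix j :: nat
      have "degree (v (j mod 5)) \<le> K" unfolding K_def by (rule Max_ge) auto
      then show "degree (v j) \<le> K" using vper by metis
    qed
    obtain j2 where j2: "j2 < 5" "degree (v j2) = K"
    proof -
      have "K \<in> (\<lambda>j. degree (v j)) ` {..<5}" unfolding K_def by (rule Max_in) (simp_all add: lessThan_empty_iff)
      then show ?thesis using that by auto
    qed
    obtain j0 where j0: "j0 < 5" "v j0 \<noteq> 0" "degree (v j0) = K"
    proof (cases "K = 0")
      case True then show ?thesis using that j1 degv[of j1] by simp
    next
      case False then show ?thesis using that j2 by (metis degree_0)
    qed
    define e where "e = (\<lambda>j. coeff (v j) K / lead_coeff V)"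
    have eper: "\<And>j. e j = e (j mod 5)" unfolding e_def v_def u_def by simp
    have cz: "coeff (v j0) K \<noteq> 0" using leading_coeff_0_iff[of "v j0"] j0(2) unfolding j0(3) by blast
    have e0: "e j0 \<noteq> 0" unfolding e_def using cz Vnz by simp
    have hl: "\<And>j. ((\<lambda>t. h j t * t^(2*m) / t^K) \<longlongrightarrow> e j) at_infinity"
    proof -
      fix j :: nat
      have L: "((\<lambda>t. poly (v j) t / poly V t * t^(2*m) / t^K) \<longlongrightarrow> coeff (v j) (degree V + K - 2*m) / lead_coeff V) at_infinity"
        by (rule rat_lim[OF Vnz]) (use degv[of j] degV in simp)
      have ev: "eventually (\<lambda>t. poly (v j) t / poly V t * t^(2*m) / t^K = h j t * t^(2*m) / t^K) at_infinity"
        using evV by eventually_elim (simp add: hv)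
      show "((\<lambda>t. h j t * t^(2*m) / t^K) \<longlongrightarrow> e j) at_infinity"
        using Lim_transform_eventually[OF L ev] degV unfolding e_def by simp
    qed
    have KV: "K \<le> 2*m"
    proof (rule ccontr)
      assume KH: "\<not> K \<le> 2*m"
      have c': "((\<lambda>t::complex. t^(2*m+1) / t^K) \<longlongrightarrow> coeff (1::complex poly) (K - (2*m+1))) at_infinity"
        using rat_lim[of "1::complex poly" 1 "2*m+1" K] KH by simp
      have L: "((\<lambda>t. (h j0 t / t) * (t^(2*m+1) / t^K)) \<longlongrightarrow> 0 * coeff (1::complex poly) (K - (2*m+1))) at_infinity"
        by (intro tendsto_mult h1 c')
      have ev: "eventually (\<lambda>t. h j0 t * t^(2*m) / t^K = (h j0 t / t) * (t^(2*m+1) / t^K)) at_infinity"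
        using ev_nz
      proof eventually_elim
        case (elim t)
        have "t^(2*m+1) = t^(2*m) * t" by simp
        then show ?case using elim by (simp add: field_simps)
      qed
      have "e j0 = 0 * coeff (1::complex poly) (K - (2*m+1))" by (rule lim_eq_ev[OF hl[of j0] L ev])
      then have "e j0 = 0" by simp
      then show False using e0 by simp
    qed
    have he: "\<And>j. j<5 \<Longrightarrow> e j * bs a j + a j * bs e j = 0"
    proof -
      fix j :: nat assume j: "j<5"
      have L1: "((\<lambda>t. Dr (v j) V t * t^(2*m) / t^(K+1)) \<longlongrightarrow> 0) at_infinity"
        by (rule Dr_lim0[OF Vnz degv[of j]]) (use KV degV in arith)
      have L2: "((\<lambda>t. (h j t * t^(2*m) / t^K) * bs (\<lambda>i. f i t / t) j + (f j t / t) * bs (\<lambda>i. h i t * t^(2*m) / t^K) j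
          - (h j t * t^(2*m) / t^K) * bs (\<lambda>i. h i t / t) j) \<longlongrightarrow> e j * bs a j + a j * bs e j - e j * bs (\<lambda>i. 0) j) at_infinity"
        unfolding bs_def by (intro tendsto_intros hl fl h1)
      have ev: "eventually (\<lambda>t. Dr (v j) V t * t^(2*m) / t^(K+1) = (h j t * t^(2*m) / t^K) * bs (\<lambda>i. f i t / t) j + (f j t / t) * bs (\<lambda>i. h i t * t^(2*m) / t^K) j
          - (h j t * t^(2*m) / t^K) * bs (\<lambda>i. h i t / t) j) at_infinity"
        using evV ev_nz
      proof eventually_elim
        case (elim t)
        have b1: "bs (\<lambda>i. f i t / t) j = bs (\<lambda>i. f i t) j / t" by (rule bs_div)
        have b2: "bs (\<lambda>i. h i t / t) j = bs (\<lambda>i. h i t) j / t" by (rule bs_div)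
        have b3: "bs (\<lambda>i. h i t * t^(2*m) / t^K) j = bs (\<lambda>i. h i t) j * t^(2*m) / t^K" by (rule bs_md)
        have tk: "t^(K+1) = t^K * t" by simp
        show ?case unfolding dh[OF j elim(1)] b1 b2 b3 tk using elim(2)
          by (intro alg1) simp_all
      qed
      have "0 = e j * bs a j + a j * bs e j - e j * bs (\<lambda>i. 0) j" by (rule lim_eq_ev[OF L1 L2 ev])
      then show "e j * bs a j + a j * bs e j = 0" by (simp add: bs_def)
    qed
    have esum: "(\<Sum>j<5. e j) = 0"
    proof -
      have L1: "((\<lambda>t. \<Sum>j<5. h j t * t^(2*m) / t^K) \<longlongrightarrow> (\<Sum>j<5. e j)) at_infinity" by (intro tendsto_sum hl)
      have L2: "((\<lambda>t::complex. 0) \<longlongrightarrow> 0) at_infinity" by simp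
      have ev: "eventually (\<lambda>t. (\<Sum>j<5. h j t * t^(2*m) / t^K) = 0) at_infinity"
        using evV
      proof eventually_elim
        case (elim t)
        then have W1: "poly W t \<noteq> 0" and W2: "poly W (-t) \<noteq> 0" using Vpoly by auto
        have "(\<Sum>j<5. h j t) = 0" unfolding h_def sum.distrib sumf[OF W1] sumf[OF W2] by simp
        then show ?case by (simp add: sum_divide_distrib[symmetric] sum_distrib_right[symmetric])
      qed
      show ?thesis using lim_eq_ev[OF L1 L2 ev] .
    qed
    have "\<forall>j<5. e j = 0" by (rule key_all[of a e, OF aper _ asum eper he esum]) (use aA in auto)
    then show False using e0 j0 by simp
  qed
  show ?thesis
  proof (intro allI impI)
    fix j :: nat and t :: complex assume j: "j < 5" and Ht: "poly (Q j) t \<noteq> 0 \<and> poly (Q j) (-t) \<noteq> 0"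
    define z where "z = P j * (Q j \<circ>\<^sub>p [:0, -1:]) + (P j \<circ>\<^sub>p [:0, -1:]) * Q j"
    have zs: "\<And>s. poly (Q j) s \<noteq> 0 \<Longrightarrow> poly (Q j) (-s) \<noteq> 0 \<Longrightarrow>
        ratf P Q j s + ratf P Q j (-s) = poly z s / (poly (Q j) s * poly (Q j) (-s))"
      unfolding z_def ratf_def using j by (simp add: pm field_simps)
    have z0: "z = 0"
    proof (rule ccontr)
      assume "z \<noteq> 0"
      then have fin: "finite {s. poly z s = 0}" by (rule poly_roots_finite)
      have sub: "{s. poly V s \<noteq> 0} \<subseteq> {s. poly z s = 0}"
      proof
        fix s assume "s \<in> {s. poly V s \<noteq> 0}"
        then have Vs: "poly V s \<noteq> 0" by simp
        then have W1: "poly W s \<noteq> 0" and W2: "poly W (-s) \<noteq> 0" using Vpoly by auto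
        then have q1: "poly (Q j) s \<noteq> 0" and q2: "poly (Q j) (-s) \<noteq> 0" using Wpoly j by auto
        have "h j s = 0" using hv[OF Vs, of j] vz j by simp
        then have "poly z s / (poly (Q j) s * poly (Q j) (-s)) = 0"
          using zs[OF q1 q2] unfolding h_def f_def by simp
        then show "s \<in> {s. poly z s = 0}" using q1 q2 by simp
      qed
      have "finite {s. poly V s = 0}" using Vnz by (rule poly_roots_finite)
      moreover have "UNIV = {s. poly V s = 0} \<union> {s. poly V s \<noteq> 0}" by auto
      ultimately have "finite (UNIV :: complex set)" using finite_subset[OF sub fin] by (metis finite_Un)
      then show False by (simp add: infinite_UNIV_char_0)
    qed
    have "poly z t = 0" using z0 by simp
    then have "ratf P Q j t + ratf P Q j (-t) = 0" using zs Ht by simp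
    then show "ratf P Q j (- t) = - ratf P Q j t" by (metis add.commute eq_neg_iff_add_eq_0)
  qed
qed

end
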